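(* Under the locking mechanism described in the context (with partial matches in the expansion lists stored independently), the global schedule of concurrently executing the edge insertion and deletion transactions is streaming consistent.
   Context: A streaming graph is a growing sequence of labelled directed edges with strictly increasing timestamps; under a sliding window, at each time point an edge may arrive and an edge may expire. A (continuous) query $Q$ with a timing order on its edges is evaluated by maintaining expansion lists: $Q$ is decomposed into edge-disjoint timing-connected subqueries $Q^1,\dots,Q^k$; for each $Q^i$ with timing sequence $\epsilon_1,\dots,\epsilon_{m}$ there is a list $L_i=\{L_i^1,\dots,L_i^{m}\}$ whose item $L_i^j$ stores the matches of the subquery $\{\epsilon_1,\dots,\epsilon_j\}$, and a list $L_0=\{L_0^1,\dots,L_0^k\}$ whose item $L_0^i$ stores matches of $Q^1\cup\dots\cup Q^i$; the items are the shared resources. Inserting an incoming edge $\sigma$ ($Ins(\sigma)$) and deleting an expired edge $\sigma'$ ($Del(\sigma')$) are each modeled as a transaction, with timestamp equal to the time the operation happens, and each is executed by its own thread as a sequence of elementary operations READ/INSERT/DELETE on individual items. Locks (shared S or exclusive X) are associated with individual items, and each item has a thread-safe FIFO wait-list of lock requests $\langle$thread id, lock type, item$\rangle$. A single main thread processes the transactions serially in timestamp order: before launching a thread $T$ it appends all of $T$'s lock requests to the ends of the wait-lists of the corresponding items, then launches $T$; launched threads run concurrently. A thread $T$ may access an item only after locking it, and it obtains the lock iff its request is at the head of that item's wait-list and the lock is compatible with the item's current status (the item is free, or both the held lock and requested lock are shared); upon obtaining the lock the request is removed from the wait-list. When $T$ finishes its computation on the item it releases the lock and wakes the thread whose request is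 now at the head of the wait-list. Each thread holds at most one lock at a time. Streaming consistency: at each time point, the answers of $Q$ are the same as those obtained by executing the insertions/deletions of edges serially in the chronological order of their timestamps. *)

theory Defs
  imports Main
begin

text \<open>Elementary operations on items (the items of the expansion lists, i.e. the shared
resources).  Items are stored independently: the store maps each item to its own value.\<close>

datatype opkind = READ | INSERT | DELETE

datatype lock = S | X

fun lock_type :: "opkind \<Rightarrow> lock" where
  "lock_type READ = S"
| "lock_type INSERT = X"
| "lock_type DELETE = X"

text \<open>An elementary operation: its kind, the item it accesses, and its effect, which,
given the thread-local state and the current value of the item, yields the new local state
and the new value of the item (for READ the value must stay unchanged, see reads_pure).\<close>

datatype ('i, 'v, 'l) elem_op =
  Op (kind: opkind) (item: 'i) (eff: "'l \<Rightarrow> 'v \<Rightarrow> 'l \<times> 'v")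

text \<open>A transaction (Ins(sigma) or Del(sigma')): an initial thread-local state and its
sequence of elementary operations.  Transactions are given as a list in timestamp order.\<close>

datatype ('i, 'v, 'l) txn =
  Txn (init: 'l) (ops: "('i, 'v, 'l) elem_op list")

definition reads_pure :: "('i, 'v, 'l) txn list \<Rightarrow> bool" where
  "reads_pure ts \<longleftrightarrow>
     (\<forall>t\<in>set ts. \<forall>eo\<in>set (ops t). kind eo = READ \<longrightarrow> (\<forall>l v. snd (eff eo l v) = v))"

fun run_ops :: "('i, 'v, 'l) elem_op list \<Rightarrow> 'l \<Rightarrow> ('i \<Rightarrow> 'v) \<Rightarrow> 'l \<times> ('i \<Rightarrow> 'v)" where
  "run_ops [] l \<sigma> = (l, \<sigma>)"
| "run_ops (eo # os) l \<sigma> =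
     (let (l', v') = eff eo l (\<sigma> (item eo)) in run_ops os l' (\<sigma>(item eo := v')))"

fun serial :: "('i, 'v, 'l) txn list \<Rightarrow> ('i \<Rightarrow> 'v) \<Rightarrow> ('i \<Rightarrow> 'v) \<times> 'l list" where
  "serial [] \<sigma> = (\<sigma>, [])"
| "serial (t # ts) \<sigma> =
     (let (l, \<sigma>') = run_ops (ops t) (init t) \<sigma>;
          (\<sigma>'', ls) = serial ts \<sigma>'
      in (\<sigma>'', l # ls))"

text \<open>A lock request is identified by (thread id, operation index); its lock type and item
are those of the corresponding operation.\<close>

definition opat :: "('i, 'v, 'l) txn list \<Rightarrow> nat \<times> nat \<Rightarrow> ('i, 'v, 'l) elem_op" where
  "opat ts r = ops (ts ! fst r) ! snd r"

record ('i, 'v, 'l) cstate =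
  store    :: "'i \<Rightarrow> 'v"
  launched :: nat                          \<comment> \<open>number of threads launched by the main thread\<close>
  wl       :: "'i \<Rightarrow> (nat \<times> nat) list"      \<comment> \<open>FIFO wait-lists\<close>
  holders  :: "'i \<Rightarrow> (nat \<times> nat) set"
  pc       :: "nat \<Rightarrow> nat"
  loc      :: "nat \<Rightarrow> 'l"
  holding  :: "nat \<Rightarrow> bool"                \<comment> \<open>whether the thread holds a lock (at most one)\<close>

definition enqueue :: "('i, 'v, 'l) txn list \<Rightarrow> nat \<Rightarrow> ('i \<Rightarrow> (nat \<times> nat) list) \<Rightarrow> ('i \<Rightarrow> (nat \<times> nat) list)" where
  "enqueue ts k W =
     fold (\<lambda>j W. W(item (opat ts (k, j)) := W (item (opat ts (k, j))) @ [(k, j)]))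
          [0..<length (ops (ts ! k))] W"

definition compatible :: "('i, 'v, 'l) txn list \<Rightarrow> (nat \<times> nat) set \<Rightarrow> nat \<times> nat \<Rightarrow> bool" where
  "compatible ts H r \<longleftrightarrow>
     H = {} \<or> (lock_type (kind (opat ts r)) = S \<and> (\<forall>r'\<in>H. lock_type (kind (opat ts r')) = S))"

inductive cstep :: "('i, 'v, 'l) txn list \<Rightarrow> ('i, 'v, 'l) cstate \<Rightarrow> ('i, 'v, 'l) cstate \<Rightarrow> bool"
  for ts where
  launch:
    "launched s < length ts \<Longrightarrow>
     cstep ts s (s\<lparr>wl := enqueue ts (launched s) (wl s), launched := Suc (launched s)\<rparr>)"
| acquire:
    "\<lbrakk> k < launched s; \<not> holding s k; pc s k < length (ops (ts ! k));
       x = item (opat ts (k, pc s k)); wl s x = (k, pc s k) # rest;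
       compatible ts (holders s x) (k, pc s k) \<rbrakk> \<Longrightarrow>
     cstep ts s (s\<lparr>wl := (wl s)(x := rest),
                   holders := (holders s)(x := insert (k, pc s k) (holders s x)),
                   holding := (holding s)(k := True)\<rparr>)"
| release:
    "\<lbrakk> k < launched s; holding s k; eo = opat ts (k, pc s k); x = item eo;
       eff eo (loc s k) (store s x) = (l', v') \<rbrakk> \<Longrightarrow>
     cstep ts s (s\<lparr>store := (store s)(x := v'),
                   loc := (loc s)(k := l'),
                   holders := (holders s)(x := holders s x - {(k, pc s k)}),
                   pc := (pc s)(k := Suc (pc s k)),
                   holding := (holding s)(k := False)\<rparr>)"

definition init_state :: "('i, 'v, 'l) txn list \<Rightarrow> ('i \<Rightarrow> 'v) \<Rightarrow> ('i, 'v, 'l) cstate" where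
  "init_state ts \<sigma> =
     \<lparr>store = \<sigma>, launched = 0, wl = (\<lambda>_. []), holders = (\<lambda>_. {}), pc = (\<lambda>_. 0),
      loc = (\<lambda>k. init (ts ! k)), holding = (\<lambda>_. False)\<rparr>"

definition finished :: "('i, 'v, 'l) txn list \<Rightarrow> ('i, 'v, 'l) cstate \<Rightarrow> bool" where
  "finished ts s \<longleftrightarrow> launched s = length ts \<and> (\<forall>k<length ts. pc s k = length (ops (ts ! k)))"

text \<open>Streaming consistency of the global schedule: every complete concurrent execution gives
the same item contents and the same per-transaction results (answers) as serial execution in
timestamp order.\<close>

definition streaming_consistent :: "('i, 'v, 'l) txn list \<Rightarrow> ('i \<Rightarrow> 'v) \<Rightarrow> bool" where
  "streaming_consistent ts \<sigma>0 \<longleftrightarrow>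
     (\<forall>s. (cstep ts)\<^sup>*\<^sup>* (init_state ts \<sigma>0) s \<and> finished ts s \<longrightarrow>
          store s = fst (serial ts \<sigma>0) \<and>
          (\<forall>k<length ts. loc s k = snd (serial ts \<sigma>0) ! k))"

end

theory Submission
  imports Defs
begin

definition len :: "('i,'v,'l) txn list \<Rightarrow> nat \<Rightarrow> nat" where
  "len ts k = length (ops (ts!k))"
definition valid :: "('i,'v,'l) txn list \<Rightarrow> nat \<times> nat \<Rightarrow> bool" where
  "valid ts r \<longleftrightarrow> fst r < length ts \<and> snd r < len ts (fst r)"
definition itm :: "('i,'v,'l) txn list \<Rightarrow> nat \<times> nat \<Rightarrow> 'i" where
  "itm ts r = item (opat ts r)"
definition isw :: "('i,'v,'l) txn list \<Rightarrow> nat \<times> nat \<Rightarrow> bool" where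
  "isw ts r \<longleftrightarrow> kind (opat ts r) \<noteq> READ"
definition dn :: "('i,'v,'l) cstate \<Rightarrow> nat \<times> nat \<Rightarrow> bool" where
  "dn s r \<longleftrightarrow> snd r < pc s (fst r)"
definition hl :: "('i,'v,'l) cstate \<Rightarrow> nat \<times> nat \<Rightarrow> bool" where
  "hl s r \<longleftrightarrow> holding s (fst r) \<and> snd r = pc s (fst r)"
definition lexless :: "nat \<times> nat \<Rightarrow> nat \<times> nat \<Rightarrow> bool" where
  "lexless p q \<longleftrightarrow> fst p < fst q \<or> (fst p = fst q \<and> snd p < snd q)"
definition reqs :: "('i,'v,'l) txn list \<Rightarrow> nat \<Rightarrow> (nat \<times> nat) list" where
  "reqs ts n = concat (map (\<lambda>k. map (Pair k) [0..<len ts k]) [0..<n])"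
definition pend :: "('i,'v,'l) txn list \<Rightarrow> ('i,'v,'l) cstate \<Rightarrow> 'i \<Rightarrow> nat \<times> nat \<Rightarrow> bool" where
  "pend ts s x r \<longleftrightarrow> itm ts r = x \<and> \<not> hl s r \<and> pc s (fst r) \<le> snd r"
definition pos :: "('i,'v,'l) txn list \<Rightarrow> nat \<times> nat \<Rightarrow> bool" where
  "pos ts p \<longleftrightarrow> (fst p < length ts \<and> snd p \<le> len ts (fst p)) \<or> p = (length ts, 0)"
definition pre :: "('i,'v,'l) txn list \<Rightarrow> ('i \<Rightarrow> 'v) \<Rightarrow> nat \<Rightarrow> 'i \<Rightarrow> 'v" where
  "pre ts \<sigma> k = fst (serial (take k ts) \<sigma>)"
definition sp :: "('i,'v,'l) txn list \<Rightarrow> ('i \<Rightarrow> 'v) \<Rightarrow> nat \<Rightarrow> nat \<Rightarrow> 'i \<Rightarrow> 'v" where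
  "sp ts \<sigma> k j = snd (run_ops (take j (ops (ts!k))) (init (ts!k)) (pre ts \<sigma> k))"
definition lp :: "('i,'v,'l) txn list \<Rightarrow> ('i \<Rightarrow> 'v) \<Rightarrow> nat \<Rightarrow> nat \<Rightarrow> 'l" where
  "lp ts \<sigma> k j = fst (run_ops (take j (ops (ts!k))) (init (ts!k)) (pre ts \<sigma> k))"

lemma run_ops_append:
  "run_ops (xs @ ys) l \<sigma> = (case run_ops xs l \<sigma> of (l', \<sigma>') \<Rightarrow> run_ops ys l' \<sigma>')"
  by (induction xs arbitrary: l \<sigma>) (auto split: prod.split)

lemma serial_append:
  "serial (xs @ ys) \<sigma> = (case serial xs \<sigma> of (\<sigma>', ls) \<Rightarrow>
      (case serial ys \<sigma>' of (\<sigma>'', ls') \<Rightarrow> (\<sigma>'', ls @ ls')))"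
  by (induction xs arbitrary: \<sigma>) (auto split: prod.split)

lemma serial_length: "length (snd (serial xs \<sigma>)) = length xs"
  by (induction xs arbitrary: \<sigma>) (auto split: prod.split, metis snd_conv)

lemma pre_Suc:
  assumes "k < length ts"
  shows "pre ts \<sigma> (Suc k) = snd (run_ops (ops (ts!k)) (init (ts!k)) (pre ts \<sigma> k))"
  using assms unfolding pre_def
  by (auto simp: take_Suc_conv_app_nth serial_append split: prod.split)

lemma serial_nth:
  assumes "k < length ts"
  shows "snd (serial ts \<sigma>) ! k = fst (run_ops (ops (ts!k)) (init (ts!k)) (pre ts \<sigma> k))"
proof -
  have e: "ts = take k ts @ ts!k # drop (Suc k) ts" using assms by (simp add: id_take_nth_drop)
  have l: "length (snd (serial (take k ts) \<sigma>)) = k" using assms by (simp add: serial_length)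
  show ?thesis
    apply (subst e)
    using l unfolding pre_def
    by (auto simp: serial_append nth_append split: prod.split)
qed

lemma run_ops_Suc:
  assumes "j < length os"
  shows "run_ops (take (Suc j) os) l \<sigma> = (case run_ops (take j os) l \<sigma> of (l1, \<sigma>1) \<Rightarrow>
     (case eff (os!j) l1 (\<sigma>1 (item (os!j))) of (l2, v2) \<Rightarrow> (l2, \<sigma>1(item (os!j) := v2))))"
  using assms by (auto simp: take_Suc_conv_app_nth run_ops_append split: prod.split)

lemma run_ops_frame:
  "(\<forall>eo\<in>set os. item eo = x \<longrightarrow> (\<forall>l v. snd (eff eo l v) = v)) \<Longrightarrow> snd (run_ops os l \<sigma>) x = \<sigma> x"
proof (induction os arbitrary: l \<sigma>)
  case Nil then show ?case by simp
next
  case (Cons eo os)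
  obtain l' v' where e: "eff eo l (\<sigma> (item eo)) = (l', v')" by fastforce
  have "snd (run_ops os l' (\<sigma>(item eo := v'))) x = (\<sigma>(item eo := v')) x" using Cons by simp
  moreover have "item eo = x \<Longrightarrow> v' = \<sigma> x" using Cons.prems e by (metis list.set_intros(1) snd_conv)
  ultimately show ?case using e by (auto split: if_splits)
qed

lemma rp_opat:
  assumes "reads_pure ts" "valid ts r" "\<not> isw ts r"
  shows "snd (eff (opat ts r) l v) = v"
  using assms unfolding reads_pure_def valid_def isw_def opat_def len_def
  by (metis nth_mem)

lemma sp_frame_in:
  assumes rp: "reads_pure ts" and k: "k < length ts" and j: "j1 \<le> j2" "j2 \<le> len ts k"
    and nw: "\<forall>j. j1 \<le> j \<and> j < j2 \<and> itm ts (k,j) = x \<longrightarrow> \<not> isw ts (k,j)"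
  shows "sp ts \<sigma> k j2 x = sp ts \<sigma> k j1 x"
proof -
  let ?os = "ops (ts!k)"
  have t: "take j2 ?os = take j1 ?os @ take (j2-j1) (drop j1 ?os)"
    using j by (metis le_add_diff_inverse take_add)
  have fr: "\<forall>eo\<in>set (take (j2-j1) (drop j1 ?os)). item eo = x \<longrightarrow> (\<forall>l v. snd (eff eo l v) = v)"
  proof (intro ballI impI allI)
    fix eo l v assume eo: "eo \<in> set (take (j2-j1) (drop j1 ?os))" and ix: "item eo = x"
    then obtain i where i: "i < length (take (j2-j1) (drop j1 ?os))" "eo = take (j2-j1) (drop j1 ?os) ! i"
      by (metis in_set_conv_nth)
    have ii: "j1 + i < j2" "j1 + i < len ts k" using i j unfolding len_def by auto
    have eq: "eo = opat ts (k, j1+i)" using i ii unfolding opat_def len_def by auto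
    have "valid ts (k, j1+i)" using k ii unfolding valid_def by auto
    moreover have "\<not> isw ts (k, j1+i)" using nw ii ix eq unfolding itm_def by auto
    ultimately show "snd (eff eo l v) = v" using rp_opat[OF rp] eq by auto
  qed
  show ?thesis unfolding sp_def t run_ops_append
    using run_ops_frame[OF fr] by (auto split: prod.split)
qed


lemma sp_zero[simp]: "sp ts \<sigma> k 0 = pre ts \<sigma> k"
  unfolding sp_def by simp

lemma pre_zero[simp]: "pre ts \<sigma> 0 = \<sigma>"
  unfolding pre_def by simp

lemma sp_len: "k < length ts \<Longrightarrow> sp ts \<sigma> k (len ts k) = pre ts \<sigma> (Suc k)"
  unfolding sp_def len_def by (simp add: pre_Suc)

lemma sp_frame_same:
  assumes rp: "reads_pure ts" and p: "pos ts (k,j1)" "pos ts (k,j2)" and j: "j1 \<le> j2"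
    and nw: "\<forall>j. j1 \<le> j \<and> j < j2 \<and> itm ts (k,j) = x \<longrightarrow> \<not> isw ts (k,j)"
  shows "sp ts \<sigma> k j2 x = sp ts \<sigma> k j1 x"
proof (cases "k < length ts")
  case True
  then show ?thesis using sp_frame_in[OF rp True j] p nw unfolding pos_def by auto
next
  case False
  then show ?thesis using p unfolding pos_def by auto
qed

lemma sp_frame_same2:
  assumes rp: "reads_pure ts" and p1: "pos ts (k,j1)" and p2: "pos ts (k,j2)"
    and le: "j1 \<le> j2"
    and nw: "\<forall>r. valid ts r \<and> itm ts r = x \<and> \<not> lexless r (k,j1) \<and> lexless r (k,j2) \<longrightarrow> \<not> isw ts r"
  shows "sp ts \<sigma> k j2 x = sp ts \<sigma> k j1 x"
proof (rule sp_frame_same[OF rp p1 p2 le], intro allI impI)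
  fix j assume a: "j1 \<le> j \<and> j < j2 \<and> itm ts (k,j) = x"
  have "k < length ts" "j2 \<le> len ts k" using p2 a unfolding pos_def by auto
  then have "valid ts (k,j)" using a unfolding valid_def by auto
  then show "\<not> isw ts (k,j)" using nw a unfolding lexless_def by auto
qed

lemma sp_frame:
  assumes rp: "reads_pure ts" and p1: "pos ts (k1,j1)" and p2: "pos ts (k2,j2)"
    and le: "\<not> lexless (k2,j2) (k1,j1)"
    and nw: "\<forall>r. valid ts r \<and> itm ts r = x \<and> \<not> lexless r (k1,j1) \<and> lexless r (k2,j2) \<longrightarrow> \<not> isw ts r"
  shows "sp ts \<sigma> k2 j2 x = sp ts \<sigma> k1 j1 x"
  using p2 le nw
proof (induction k2 arbitrary: j2)
  case 0
  then have "k1 = 0" "j1 \<le> j2" unfolding lexless_def by auto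
  then show ?case using sp_frame_same2[OF rp] p1 0 by blast
next
  case (Suc m)
  show ?case
  proof (cases "k1 = Suc m")
    case True
    then have "j1 \<le> j2" using Suc.prems unfolding lexless_def by auto
    then show ?thesis using sp_frame_same2[OF rp] p1 Suc.prems True by blast
  next
    case False
    then have k1: "k1 \<le> m" using Suc.prems(2) unfolding lexless_def by auto
    have m: "m < length ts" using Suc.prems(1) unfolding pos_def by auto
    have a: "sp ts \<sigma> (Suc m) j2 x = sp ts \<sigma> (Suc m) 0 x"
    proof (rule sp_frame_same2[OF rp])
      show "pos ts (Suc m, 0)" using m unfolding pos_def by auto
      show "pos ts (Suc m, j2)" by fact
      show "\<forall>r. valid ts r \<and> itm ts r = x \<and> \<not> lexless r (Suc m, 0) \<and> lexless r (Suc m, j2) \<longrightarrow> \<not> isw ts r"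
        using Suc.prems(3) k1 unfolding lexless_def by auto
    qed simp
    have b: "sp ts \<sigma> m (len ts m) x = sp ts \<sigma> k1 j1 x"
    proof (rule Suc.IH)
      show "pos ts (m, len ts m)" using m unfolding pos_def by auto
      show "\<not> lexless (m, len ts m) (k1, j1)"
        using k1 p1 m unfolding lexless_def pos_def by auto
      show "\<forall>r. valid ts r \<and> itm ts r = x \<and> \<not> lexless r (k1, j1) \<and> lexless r (m, len ts m) \<longrightarrow> \<not> isw ts r"
        using Suc.prems(3) unfolding lexless_def by auto
    qed
    show ?thesis using a b sp_len[OF m] by simp
  qed
qed

lemma reqs_Suc: "reqs ts (Suc n) = reqs ts n @ map (Pair n) [0..<len ts n]"
  unfolding reqs_def by simp

lemma set_reqs: "set (reqs ts n) = {r. fst r < n \<and> snd r < len ts (fst r)}"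
  unfolding reqs_def by auto

lemma sorted_reqs: "sorted_wrt lexless (reqs ts n)"
proof (induction n)
  case 0 then show ?case unfolding reqs_def by simp
next
  case (Suc n)
  have "sorted_wrt lexless (map (Pair n) [0..<len ts n])"
    unfolding sorted_wrt_map lexless_def by (simp add: sorted_wrt_iff_nth_less)
  then show ?case using Suc unfolding reqs_Suc sorted_wrt_append set_reqs lexless_def by auto
qed

lemma sorted_distinct: "sorted_wrt lexless xs \<Longrightarrow> distinct xs"
  by (induction xs) (auto simp: lexless_def)

lemma filter_head_remove:
  "distinct xs \<Longrightarrow> filter P xs = a # rest \<Longrightarrow> filter (\<lambda>y. P y \<and> y \<noteq> a) xs = rest"
proof (induction xs)
  case Nil then show ?case by simp
next
  case (Cons y ys)
  show ?case
  proof (cases "P y")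
    case True
    then have "y = a" "rest = filter P ys" using Cons.prems by auto
    moreover have "a \<notin> set ys" using Cons.prems \<open>y = a\<close> by auto
    ultimately show ?thesis using True by (auto intro: filter_cong)
  next
    case False then show ?thesis using Cons by auto
  qed
qed

lemma filter_head_min:
  assumes "sorted_wrt lexless xs" "filter P xs = a # rest" "y \<in> set xs" "P y" "lexless y a"
  shows False
proof -
  have "y \<in> set (filter P xs)" using assms(3,4) by simp
  then have "y \<in> set (a # rest)" using assms(2) by simp
  moreover have "sorted_wrt lexless (a # rest)" using assms(1,2) by (metis sorted_wrt_filter)
  ultimately show False using assms(5) unfolding lexless_def by auto
qed

lemma fold_enq:
  "fold (\<lambda>j W. W(item (opat ts (k, j)) := W (item (opat ts (k, j))) @ [(k, j)])) js W x
   = W x @ filter (\<lambda>r. itm ts r = x) (map (Pair k) js)"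
  by (induction js arbitrary: W) (auto simp: itm_def)

lemma enqueue_eq:
  "enqueue ts k W x = W x @ filter (\<lambda>r. itm ts r = x) (map (Pair k) [0..<len ts k])"
  unfolding enqueue_def len_def by (simp add: fold_enq)

lemma lock_S: "lock_type k = S \<longleftrightarrow> k = READ"
  by (cases k) auto

lemma lp_sp_Suc:
  assumes "j < len ts k" "eff (opat ts (k,j)) (lp ts \<sigma> k j) (sp ts \<sigma> k j (itm ts (k,j))) = (l', v')"
  shows "lp ts \<sigma> k (Suc j) = l' \<and> sp ts \<sigma> k (Suc j) = (sp ts \<sigma> k j)(itm ts (k,j) := v')"
  using assms unfolding lp_def sp_def len_def opat_def itm_def
  by (auto simp: run_ops_Suc split: prod.split)


definition Inv :: "('i,'v,'l) txn list \<Rightarrow> ('i \<Rightarrow> 'v) \<Rightarrow> ('i,'v,'l) cstate \<Rightarrow> bool" where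
  "Inv ts \<sigma> s \<longleftrightarrow>
    launched s \<le> length ts \<and>
    (\<forall>k. launched s \<le> k \<longrightarrow> pc s k = 0 \<and> \<not> holding s k) \<and>
    (\<forall>k<length ts. pc s k \<le> len ts k) \<and>
    (\<forall>k. holding s k \<longrightarrow> pc s k < len ts k) \<and>
    (\<forall>x. wl s x = filter (pend ts s x) (reqs ts (launched s))) \<and>
    (\<forall>x. holders s x = {r. valid ts r \<and> itm ts r = x \<and> hl s r}) \<and>
    (\<forall>r r'. valid ts r \<and> valid ts r' \<and> itm ts r' = itm ts r \<and> (dn s r \<or> hl s r) \<and> lexless r' r \<longrightarrow>
        (dn s r' \<or> hl s r') \<and> (isw ts r' \<longrightarrow> dn s r') \<and> (isw ts r \<longrightarrow> dn s r')) \<and>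
    (\<forall>k<length ts. loc s k = lp ts \<sigma> k (pc s k)) \<and>
    (\<forall>x p. pos ts p \<and> (\<forall>r. valid ts r \<and> itm ts r = x \<and> isw ts r \<and> lexless r p \<longrightarrow> dn s r) \<and>
        (\<forall>r. valid ts r \<and> itm ts r = x \<and> isw ts r \<and> \<not> lexless r p \<longrightarrow> \<not> dn s r)
        \<longrightarrow> store s x = sp ts \<sigma> (fst p) (snd p) x)"

lemma pos00: "pos ts (0,0)"
  unfolding pos_def by auto

lemma inv_init:
  assumes rp: "reads_pure ts"
  shows "Inv ts \<sigma> (init_state ts \<sigma>)"
proof -
  let ?s = "init_state ts \<sigma>"
  have dn0: "\<not> dn ?s r" for r unfolding dn_def init_state_def by simp
  have hl0: "\<not> hl ?s r" for r unfolding hl_def init_state_def by simp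
  have V: "store ?s x = sp ts \<sigma> (fst p) (snd p) x"
    if p: "pos ts p" and a: "\<forall>r. valid ts r \<and> itm ts r = x \<and> isw ts r \<and> lexless r p \<longrightarrow> dn ?s r" for x p
  proof -
    obtain k j where pk: "p = (k,j)" by fastforce
    have "sp ts \<sigma> k j x = sp ts \<sigma> 0 0 x"
    proof (rule sp_frame[OF rp pos00])
      show "pos ts (k,j)" using p pk by simp
      show "\<not> lexless (k, j) (0, 0)" unfolding lexless_def by simp
      show "\<forall>r. valid ts r \<and> itm ts r = x \<and> \<not> lexless r (0, 0) \<and> lexless r (k, j) \<longrightarrow> \<not> isw ts r"
        using a dn0 pk by blast
    qed
    then show ?thesis using pk unfolding init_state_def by simp
  qed
  show ?thesis unfolding Inv_def
    using dn0 hl0 V by (simp add: init_state_def reqs_def lp_def)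
qed


lemma inv_launch:
  assumes I: "Inv ts \<sigma> s" and l: "launched s < length ts"
    and e: "launched s' = Suc (launched s)" "pc s' = pc s" "holding s' = holding s"
      "holders s' = holders s" "loc s' = loc s" "store s' = store s"
      "wl s' = enqueue ts (launched s) (wl s)"
  shows "Inv ts \<sigma> s'"
proof -
  have dn: "dn s' = dn s" by (rule ext) (simp add: dn_def e)
  have hl: "hl s' = hl s" by (rule ext) (simp add: hl_def e)
  have pd: "pend ts s' = pend ts s" by (intro ext) (simp add: pend_def hl e)
  have i1: "\<forall>k. launched s \<le> k \<longrightarrow> pc s k = 0 \<and> \<not> holding s k" using I unfolding Inv_def by blast
  have i4: "\<forall>x. wl s x = filter (pend ts s x) (reqs ts (launched s))" using I unfolding Inv_def by blast
  have wl: "\<forall>x. wl s' x = filter (pend ts s' x) (reqs ts (launched s'))"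
  proof
    fix x
    have "filter (\<lambda>r. itm ts r = x) (map (Pair (launched s)) [0..<len ts (launched s)])
        = filter (pend ts s x) (map (Pair (launched s)) [0..<len ts (launched s)])"
      using i1 by (intro filter_cong) (auto simp: pend_def hl_def)
    then have "wl s' x = filter (pend ts s x) (reqs ts (launched s)) @ filter (pend ts s x) (map (Pair (launched s)) [0..<len ts (launched s)])"
      using i4 by (simp only: e enqueue_eq)
    then show "wl s' x = filter (pend ts s' x) (reqs ts (launched s'))"
      by (simp only: pd e(1) reqs_Suc filter_append)
  qed
  have i1': "\<forall>k. launched s' \<le> k \<longrightarrow> pc s' k = 0 \<and> \<not> holding s' k" using i1 e by simp
  have c1: "launched s \<le> length ts" and
    c3: "\<forall>k<length ts. pc s k \<le> len ts k" and
    c4: "\<forall>k. holding s k \<longrightarrow> pc s k < len ts k" and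
    c6: "\<forall>x. holders s x = {r. valid ts r \<and> itm ts r = x \<and> hl s r}" and
    c7: "\<forall>r r'. valid ts r \<and> valid ts r' \<and> itm ts r' = itm ts r \<and> (dn s r \<or> hl s r) \<and> lexless r' r \<longrightarrow>
        (dn s r' \<or> hl s r') \<and> (isw ts r' \<longrightarrow> dn s r') \<and> (isw ts r \<longrightarrow> dn s r')" and
    c8: "\<forall>k<length ts. loc s k = lp ts \<sigma> k (pc s k)" and
    c9: "\<forall>x p. pos ts p \<and> (\<forall>r. valid ts r \<and> itm ts r = x \<and> isw ts r \<and> lexless r p \<longrightarrow> dn s r) \<and>
        (\<forall>r. valid ts r \<and> itm ts r = x \<and> isw ts r \<and> \<not> lexless r p \<longrightarrow> \<not> dn s r)
        \<longrightarrow> store s x = sp ts \<sigma> (fst p) (snd p) x" using I unfolding Inv_def by blast+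
  show ?thesis unfolding Inv_def dn hl
  proof (intro conjI)
    show "launched s' \<le> length ts" using l e by simp
    show "\<forall>k<length ts. pc s' k \<le> len ts k" using c3 e by simp
    show "\<forall>k. holding s' k \<longrightarrow> pc s' k < len ts k" using c4 e by simp
    show "\<forall>x. holders s' x = {r. valid ts r \<and> itm ts r = x \<and> hl s r}" using c6 e by simp
    show "\<forall>k<length ts. loc s' k = lp ts \<sigma> k (pc s' k)" using c8 e by simp
    show "\<forall>x p. pos ts p \<and> (\<forall>r. valid ts r \<and> itm ts r = x \<and> isw ts r \<and> lexless r p \<longrightarrow> dn s r) \<and>
        (\<forall>r. valid ts r \<and> itm ts r = x \<and> isw ts r \<and> \<not> lexless r p \<longrightarrow> \<not> dn s r)
        \<longrightarrow> store s' x = sp ts \<sigma> (fst p) (snd p) x" using c9 e by simp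
  qed (use c7 wl i1' in blast)+
qed


lemma inv_acquire:
  assumes I: "Inv ts \<sigma> s" and k: "k < launched s" "\<not> holding s k" "pc s k < len ts k"
    and x: "x = itm ts (k, pc s k)" and w: "wl s x = (k, pc s k) # rest"
    and cmp: "compatible ts (holders s x) (k, pc s k)"
    and e: "launched s' = launched s" "pc s' = pc s" "holding s' = (holding s)(k := True)"
      "holders s' = (holders s)(x := insert (k, pc s k) (holders s x))" "loc s' = loc s" "store s' = store s"
      "wl s' = (wl s)(x := rest)"
  shows "Inv ts \<sigma> s'"
proof -
  define r where "r = (k, pc s k)"
  have c1: "launched s \<le> length ts" and
    i1: "\<forall>k. launched s \<le> k \<longrightarrow> pc s k = 0 \<and> \<not> holding s k" and
    c3: "\<forall>k<length ts. pc s k \<le> len ts k" and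
    c4: "\<forall>k. holding s k \<longrightarrow> pc s k < len ts k" and
    i4: "\<forall>x. wl s x = filter (pend ts s x) (reqs ts (launched s))" and
    c6: "\<forall>x. holders s x = {r. valid ts r \<and> itm ts r = x \<and> hl s r}" and
    c7: "\<forall>r r'. valid ts r \<and> valid ts r' \<and> itm ts r' = itm ts r \<and> (dn s r \<or> hl s r) \<and> lexless r' r \<longrightarrow>
        (dn s r' \<or> hl s r') \<and> (isw ts r' \<longrightarrow> dn s r') \<and> (isw ts r \<longrightarrow> dn s r')" and
    c8: "\<forall>k<length ts. loc s k = lp ts \<sigma> k (pc s k)" and
    c9: "\<forall>x p. pos ts p \<and> (\<forall>r. valid ts r \<and> itm ts r = x \<and> isw ts r \<and> lexless r p \<longrightarrow> dn s r) \<and>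
        (\<forall>r. valid ts r \<and> itm ts r = x \<and> isw ts r \<and> \<not> lexless r p \<longrightarrow> \<not> dn s r)
        \<longrightarrow> store s x = sp ts \<sigma> (fst p) (snd p) x" using I unfolding Inv_def by blast+
  have dn: "dn s' = dn s" by (rule ext) (simp add: dn_def e)
  have hl': "hl s' q \<longleftrightarrow> hl s q \<or> q = r" for q
    using k(2) unfolding hl_def r_def e by (cases q) auto
  have notr: "\<not> dn s r" "\<not> hl s r" unfolding r_def dn_def hl_def using k by auto
  have pd': "pend ts s' y q \<longleftrightarrow> pend ts s y q \<and> q \<noteq> r" for y q
    unfolding pend_def hl' e by auto
  have fx: "filter (pend ts s x) (reqs ts (launched s)) = r # rest" using i4 w r_def by metis
  have "r \<in> set (filter (pend ts s x) (reqs ts (launched s)))" using fx by simp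
  then have pr: "pend ts s x r" and rv: "valid ts r"
    using c1 by (auto simp: set_reqs valid_def)
  have ix: "itm ts r = x" using x r_def by simp
  have dist: "distinct (reqs ts (launched s))" by (rule sorted_distinct[OF sorted_reqs])
  have wl': "\<forall>y. wl s' y = filter (pend ts s' y) (reqs ts (launched s'))"
  proof
    fix y
    show "wl s' y = filter (pend ts s' y) (reqs ts (launched s'))"
    proof (cases "y = x")
      case True
      have "rest = filter (\<lambda>q. pend ts s x q \<and> q \<noteq> r) (reqs ts (launched s))"
        using filter_head_remove[OF dist fx] by simp
      then show ?thesis using True unfolding pd' e by simp
    next
      case False
      have "filter (pend ts s y) (reqs ts (launched s)) = filter (pend ts s' y) (reqs ts (launched s))"
        using False ix unfolding pd' by (intro filter_cong) (auto simp: pend_def)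
      then show ?thesis using False i4 e by simp
    qed
  qed
  have c6': "\<forall>y. holders s' y = {q. valid ts q \<and> itm ts q = y \<and> hl s' q}"
    using c6 rv ix unfolding hl' e r_def by auto
  have K: "dn s q \<or> hl s q" if "valid ts q" "itm ts q = x" "lexless q r" for q
  proof (rule ccontr)
    assume a: "\<not> (dn s q \<or> hl s q)"
    have "q \<in> set (reqs ts (launched s))"
      using that k(1) unfolding set_reqs valid_def lexless_def r_def by auto
    moreover have "pend ts s x q" using a that unfolding pend_def dn_def by auto
    ultimately show False using filter_head_min[OF sorted_reqs fx] that(3) by blast
  qed
  have cmpH: "\<not> isw ts q \<and> \<not> isw ts r" if "hl s q" "valid ts q" "itm ts q = x" for q
  proof -
    have "q \<in> holders s x" using c6 that by auto
    then show ?thesis using cmp unfolding compatible_def isw_def r_def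
      by (auto simp: lock_S)
  qed
  have c7': "\<forall>r1 r2. valid ts r1 \<and> valid ts r2 \<and> itm ts r2 = itm ts r1 \<and> (dn s r1 \<or> hl s' r1) \<and> lexless r2 r1 \<longrightarrow>
        (dn s r2 \<or> hl s' r2) \<and> (isw ts r2 \<longrightarrow> dn s r2) \<and> (isw ts r1 \<longrightarrow> dn s r2)"
  proof (intro allI impI)
    fix r1 r2
    assume a: "valid ts r1 \<and> valid ts r2 \<and> itm ts r2 = itm ts r1 \<and> (dn s r1 \<or> hl s' r1) \<and> lexless r2 r1"
    show "(dn s r2 \<or> hl s' r2) \<and> (isw ts r2 \<longrightarrow> dn s r2) \<and> (isw ts r1 \<longrightarrow> dn s r2)"
    proof (cases "r1 = r")
      case True
      have i2: "itm ts r2 = x" using a ix True by simp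
      have "dn s r2 \<or> hl s r2" using K a i2 True by blast
      moreover have "hl s r2 \<Longrightarrow> \<not> isw ts r2 \<and> \<not> isw ts r" using cmpH a i2 by blast
      ultimately show ?thesis using True hl' by blast
    next
      case False
      then have "dn s r1 \<or> hl s r1" using a hl' by auto
      then show ?thesis using c7 a hl' by blast
    qed
  qed
  have i1': "\<forall>k'. launched s' \<le> k' \<longrightarrow> pc s' k' = 0 \<and> \<not> holding s' k'"
    using i1 k(1) e by auto
  have c4': "\<forall>k'. holding s' k' \<longrightarrow> pc s' k' < len ts k'" using c4 k(3) e by auto
  show ?thesis unfolding Inv_def dn
  proof (intro conjI)
    show "launched s' \<le> length ts" using c1 e by simp
    show "\<forall>k<length ts. pc s' k \<le> len ts k" using c3 e by simp
    show "\<forall>k<length ts. loc s' k = lp ts \<sigma> k (pc s' k)" using c8 e by simp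
    show "\<forall>x p. pos ts p \<and> (\<forall>r. valid ts r \<and> itm ts r = x \<and> isw ts r \<and> lexless r p \<longrightarrow> dn s r) \<and>
        (\<forall>r. valid ts r \<and> itm ts r = x \<and> isw ts r \<and> \<not> lexless r p \<longrightarrow> \<not> dn s r)
        \<longrightarrow> store s' x = sp ts \<sigma> (fst p) (snd p) x" using c9 e by simp
  qed (use c7' wl' i1' c4' c6' in blast)+
qed


lemma inv_release:
  assumes rp: "reads_pure ts" and I: "Inv ts \<sigma> s" and k: "k < launched s" "holding s k"
    and eo: "eo = opat ts (k, pc s k)" and x: "x = item eo"
    and ef: "eff eo (loc s k) (store s x) = (l', v')"
    and e: "launched s' = launched s" "store s' = (store s)(x := v')" "loc s' = (loc s)(k := l')"
      "holders s' = (holders s)(x := holders s x - {(k, pc s k)})"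
      "pc s' = (pc s)(k := Suc (pc s k))" "holding s' = (holding s)(k := False)" "wl s' = wl s"
  shows "Inv ts \<sigma> s'"
proof -
  define r where "r = (k, pc s k)"
  have c1: "launched s \<le> length ts" and
    i1: "\<forall>k. launched s \<le> k \<longrightarrow> pc s k = 0 \<and> \<not> holding s k" and
    c3: "\<forall>k<length ts. pc s k \<le> len ts k" and
    c4: "\<forall>k. holding s k \<longrightarrow> pc s k < len ts k" and
    i4: "\<forall>x. wl s x = filter (pend ts s x) (reqs ts (launched s))" and
    c6: "\<forall>x. holders s x = {r. valid ts r \<and> itm ts r = x \<and> hl s r}" and
    c7: "\<forall>r r'. valid ts r \<and> valid ts r' \<and> itm ts r' = itm ts r \<and> (dn s r \<or> hl s r) \<and> lexless r' r \<longrightarrow>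
        (dn s r' \<or> hl s r') \<and> (isw ts r' \<longrightarrow> dn s r') \<and> (isw ts r \<longrightarrow> dn s r')" and
    c8: "\<forall>k<length ts. loc s k = lp ts \<sigma> k (pc s k)" and
    c9: "\<forall>x p. pos ts p \<and> (\<forall>r. valid ts r \<and> itm ts r = x \<and> isw ts r \<and> lexless r p \<longrightarrow> dn s r) \<and>
        (\<forall>r. valid ts r \<and> itm ts r = x \<and> isw ts r \<and> \<not> lexless r p \<longrightarrow> \<not> dn s r)
        \<longrightarrow> store s x = sp ts \<sigma> (fst p) (snd p) x" using I unfolding Inv_def by blast+
  have c7r: "\<And>r r'. valid ts r \<Longrightarrow> valid ts r' \<Longrightarrow> itm ts r' = itm ts r \<Longrightarrow> dn s r \<or> hl s r \<Longrightarrow> lexless r' r \<Longrightarrow>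
        (dn s r' \<or> hl s r') \<and> (isw ts r' \<longrightarrow> dn s r') \<and> (isw ts r \<longrightarrow> dn s r')" using c7 by blast
  have pcl: "pc s k < len ts k" using c4 k by blast
  have kl: "k < length ts" using c1 k by simp
  have rv: "valid ts r" unfolding valid_def r_def using pcl kl by simp
  have ix: "itm ts r = x" unfolding itm_def r_def x eo by simp
  have hr: "hl s r" unfolding hl_def r_def using k by simp
  have notdn: "\<not> dn s r" unfolding dn_def r_def by simp
  have dn': "dn s' q \<longleftrightarrow> dn s q \<or> q = r" for q
    unfolding dn_def r_def e by (cases q) auto
  have hl': "hl s' q \<longleftrightarrow> hl s q \<and> q \<noteq> r" for q
    unfolding hl_def r_def e by (cases q) auto
  have pd': "pend ts s' y = pend ts s y" for y
    using k(2) unfolding pend_def hl_def e r_def by (intro ext) auto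
  have wl': "\<forall>y. wl s' y = filter (pend ts s' y) (reqs ts (launched s'))"
    using i4 unfolding pd' e by simp
  have c6': "\<forall>y. holders s' y = {q. valid ts q \<and> itm ts q = y \<and> hl s' q}"
    using c6 ix unfolding hl' e r_def by auto
  have c7': "\<forall>r1 r2. valid ts r1 \<and> valid ts r2 \<and> itm ts r2 = itm ts r1 \<and> (dn s' r1 \<or> hl s' r1) \<and> lexless r2 r1 \<longrightarrow>
        (dn s' r2 \<or> hl s' r2) \<and> (isw ts r2 \<longrightarrow> dn s' r2) \<and> (isw ts r1 \<longrightarrow> dn s' r2)"
  proof (intro allI impI)
    fix r1 r2
    assume a: "valid ts r1 \<and> valid ts r2 \<and> itm ts r2 = itm ts r1 \<and> (dn s' r1 \<or> hl s' r1) \<and> lexless r2 r1"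
    have hd: "dn s' q \<or> hl s' q \<longleftrightarrow> dn s q \<or> hl s q" for q using dn' hl' hr by auto
    have "dn s r1 \<or> hl s r1" using a hd by blast
    then have "(dn s r2 \<or> hl s r2) \<and> (isw ts r2 \<longrightarrow> dn s r2) \<and> (isw ts r1 \<longrightarrow> dn s r2)"
      using c7r[of r1 r2] a by blast
    then show "(dn s' r2 \<or> hl s' r2) \<and> (isw ts r2 \<longrightarrow> dn s' r2) \<and> (isw ts r1 \<longrightarrow> dn s' r2)"
      using hd dn' by blast
  qed
  have lexr: "lexless r q" if "\<not> lexless q r" "q \<noteq> r" for q
    using that unfolding lexless_def by (cases q, cases r) auto
  have Vr: "store s x = sp ts \<sigma> k (pc s k) x"
  proof -
    have "pos ts r" unfolding pos_def r_def using kl pcl by simp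
    moreover have "\<forall>q. valid ts q \<and> itm ts q = x \<and> isw ts q \<and> lexless q r \<longrightarrow> dn s q"
    proof (intro allI impI)
      fix q assume a: "valid ts q \<and> itm ts q = x \<and> isw ts q \<and> lexless q r"
      show "dn s q" using c7r[of r q] rv a hr ix by auto
    qed
    moreover have "\<forall>q. valid ts q \<and> itm ts q = x \<and> isw ts q \<and> \<not> lexless q r \<longrightarrow> \<not> dn s q"
    proof (intro allI impI notI)
      fix q assume a: "valid ts q \<and> itm ts q = x \<and> isw ts q \<and> \<not> lexless q r" and d: "dn s q"
      show False
      proof (cases "q = r")
        case True then show False using d notdn by simp
      next
        case False
        then have "lexless r q" using lexr a by blast
        then show False using c7r[of q r] a d rv ix notdn by auto
      qed
    qed
    ultimately show ?thesis using c9 unfolding r_def by auto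
  qed
  have lk: "loc s k = lp ts \<sigma> k (pc s k)" using c8 kl by blast
  have st: "lp ts \<sigma> k (Suc (pc s k)) = l' \<and> sp ts \<sigma> k (Suc (pc s k)) = (sp ts \<sigma> k (pc s k))(x := v')"
  proof -
    have "eff (opat ts (k, pc s k)) (lp ts \<sigma> k (pc s k)) (sp ts \<sigma> k (pc s k) (itm ts (k, pc s k))) = (l', v')"
      using ef lk Vr ix eo r_def by simp
    then show ?thesis using lp_sp_Suc[OF pcl] ix r_def by metis
  qed
  have c8': "\<forall>k'<length ts. loc s' k' = lp ts \<sigma> k' (pc s' k')"
    using c8 st unfolding e by auto
  have c9': "\<forall>y p. pos ts p \<and> (\<forall>q. valid ts q \<and> itm ts q = y \<and> isw ts q \<and> lexless q p \<longrightarrow> dn s' q) \<and>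
        (\<forall>q. valid ts q \<and> itm ts q = y \<and> isw ts q \<and> \<not> lexless q p \<longrightarrow> \<not> dn s' q)
        \<longrightarrow> store s' y = sp ts \<sigma> (fst p) (snd p) y"
  proof (intro allI impI)
    fix y p
    assume a: "pos ts p \<and> (\<forall>q. valid ts q \<and> itm ts q = y \<and> isw ts q \<and> lexless q p \<longrightarrow> dn s' q) \<and>
        (\<forall>q. valid ts q \<and> itm ts q = y \<and> isw ts q \<and> \<not> lexless q p \<longrightarrow> \<not> dn s' q)"
    show "store s' y = sp ts \<sigma> (fst p) (snd p) y"
    proof (cases "y = x")
      case False
      have "\<forall>q. valid ts q \<and> itm ts q = y \<and> isw ts q \<and> lexless q p \<longrightarrow> dn s q"
        using a False ix dn' by blast
      moreover have "\<forall>q. valid ts q \<and> itm ts q = y \<and> isw ts q \<and> \<not> lexless q p \<longrightarrow> \<not> dn s q"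
        using a dn' by blast
      ultimately show ?thesis using c9 a False e by simp
    next
      case yx: True
      show ?thesis
      proof (cases "isw ts r")
        case False
        have "v' = store s x" using rp_opat[OF rp rv False, of "loc s k" "store s x"] ef eo r_def
          by (metis snd_conv)
        moreover have "\<forall>q. valid ts q \<and> itm ts q = y \<and> isw ts q \<and> lexless q p \<longrightarrow> dn s q"
          using a False dn' by blast
        moreover have "\<forall>q. valid ts q \<and> itm ts q = y \<and> isw ts q \<and> \<not> lexless q p \<longrightarrow> \<not> dn s q"
          using a dn' by blast
        ultimately show ?thesis using c9 a yx e by simp
      next
        case True
        have rp1: "lexless r p" using a True rv ix yx dn' by blast
        obtain k2 j2 where p: "p = (k2, j2)" by fastforce
        have "sp ts \<sigma> k2 j2 x = sp ts \<sigma> k (Suc (pc s k)) x"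
        proof (rule sp_frame[OF rp])
          show "pos ts (k, Suc (pc s k))" unfolding pos_def using kl pcl by simp
          show "pos ts (k2, j2)" using a p by simp
          show "\<not> lexless (k2, j2) (k, Suc (pc s k))" using rp1 p unfolding lexless_def r_def by auto
          show "\<forall>q. valid ts q \<and> itm ts q = x \<and> \<not> lexless q (k, Suc (pc s k)) \<and> lexless q (k2, j2) \<longrightarrow> \<not> isw ts q"
          proof (intro allI impI notI)
            fix q assume b: "valid ts q \<and> itm ts q = x \<and> \<not> lexless q (k, Suc (pc s k)) \<and> lexless q (k2, j2)"
              and w: "isw ts q"
            have "dn s' q" using a b w p yx by blast
            moreover have "q \<noteq> r" using b unfolding r_def lexless_def by auto
            ultimately have dq: "dn s q" using dn' by blast
            have "lexless r q" using b unfolding r_def lexless_def by (cases q) auto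
            then show False using c7r[of q r] b w dq rv ix notdn by auto
          qed
        qed
        then show ?thesis using st p yx e by simp
      qed
    qed
  qed
  have i1': "\<forall>k'. launched s' \<le> k' \<longrightarrow> pc s' k' = 0 \<and> \<not> holding s' k'"
    using i1 k(1) e by auto
  have c3': "\<forall>k'<length ts. pc s' k' \<le> len ts k'" using c3 pcl e by auto
  have c4': "\<forall>k'. holding s' k' \<longrightarrow> pc s' k' < len ts k'" using c4 e by auto
  show ?thesis unfolding Inv_def
  proof (intro conjI)
    show "launched s' \<le> length ts" using c1 e by simp
  qed (use c7' wl' i1' c3' c4' c6' c8' c9' in blast)+
qed


lemma inv_step:
  assumes rp: "reads_pure ts" and st: "cstep ts s s'" and I: "Inv ts \<sigma> s"
  shows "Inv ts \<sigma> s'"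
  using st
proof cases
  case (launch)
  show ?thesis by (rule inv_launch[OF I launch(2)]) (simp_all add: launch(1))
next
  case (acquire k x rest)
  show ?thesis
  proof (rule inv_acquire[OF I acquire(2,3)])
    show "pc s k < len ts k" using acquire(4) unfolding len_def .
    show "x = itm ts (k, pc s k)" using acquire(5) unfolding itm_def .
  qed (use acquire in simp_all)
next
  case (release k eo x l' v')
  show ?thesis
    by (rule inv_release[OF rp I release(2,3,4,5,6)]) (simp_all add: release(1))
qed

lemma inv_reach:
  assumes rp: "reads_pure ts" and r: "(cstep ts)\<^sup>*\<^sup>* (init_state ts \<sigma>) s"
  shows "Inv ts \<sigma> s"
  using r
proof (induction rule: rtranclp_induct)
  case base then show ?case by (rule inv_init[OF rp])
next
  case (step y z) then show ?case using inv_step[OF rp] by blast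
qed

theorem theorem4:
  fixes ts :: "('i, 'v, 'l) txn list" and \<sigma>0 :: "'i \<Rightarrow> 'v"
  assumes "reads_pure ts"
  shows "streaming_consistent ts \<sigma>0"
  unfolding streaming_consistent_def
proof (intro allI impI)
  fix s
  assume a: "(cstep ts)\<^sup>*\<^sup>* (init_state ts \<sigma>0) s \<and> finished ts s"
  have I: "Inv ts \<sigma>0 s" using inv_reach[OF assms] a by blast
  have fin: "launched s = length ts" "\<forall>k<length ts. pc s k = len ts k"
    using a unfolding finished_def len_def by auto
  have c8: "\<forall>k<length ts. loc s k = lp ts \<sigma>0 k (pc s k)" and
    c9: "\<forall>x p. pos ts p \<and> (\<forall>r. valid ts r \<and> itm ts r = x \<and> isw ts r \<and> lexless r p \<longrightarrow> dn s r) \<and>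
        (\<forall>r. valid ts r \<and> itm ts r = x \<and> isw ts r \<and> \<not> lexless r p \<longrightarrow> \<not> dn s r)
        \<longrightarrow> store s x = sp ts \<sigma>0 (fst p) (snd p) x" using I unfolding Inv_def by blast+
  have "store s x = fst (serial ts \<sigma>0) x" for x
  proof -
    have p: "pos ts (length ts, 0)" unfolding pos_def by simp
    have "\<forall>r. valid ts r \<and> itm ts r = x \<and> isw ts r \<and> lexless r (length ts, 0) \<longrightarrow> dn s r"
      using fin unfolding valid_def dn_def by auto
    moreover have "\<forall>r. valid ts r \<and> itm ts r = x \<and> isw ts r \<and> \<not> lexless r (length ts, 0) \<longrightarrow> \<not> dn s r"
      unfolding valid_def lexless_def by auto
    ultimately have "store s x = sp ts \<sigma>0 (length ts) 0 x" using c9 p by fastforce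
    then show ?thesis unfolding sp_zero pre_def by simp
  qed
  moreover have "\<forall>k<length ts. loc s k = snd (serial ts \<sigma>0) ! k"
    using c8 fin by (simp add: serial_nth lp_def len_def)
  ultimately show "store s = fst (serial ts \<sigma>0) \<and> (\<forall>k<length ts. loc s k = snd (serial ts \<sigma>0) ! k)"
    by auto
qed

end
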